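(* Let $G=(V,E)$ be an undirected graph (not necessarily locally finite), let $X\subset V$ with $\mathrm{width}(X)<+\infty$, let $f:X\to\mathbb{R}$ with $f\ge 0$, and let $u,v:V\to\mathbb{R}$ satisfy $v\ge -C$ and $u\le C$ on $V$ for some constant $C>0$. Suppose that \[ -\Delta_\infty v(x)\ \ge\ f(x)\ \ge\ -\Delta_\infty u(x)\qquad\text{for all } x\in X. \] Then $\sup_{V}(u-v)=\sup_{V\setminus X}(u-v)$.
   Context: For $x,y\in V$ write $x\sim y$ if $\{x,y\}\in E$. The combinatorial distance $d(A,B)$ between subsets $A,B\subset V$ is the infimum of the lengths $n$ of paths $A\ni x_0\sim x_1\sim\cdots\sim x_n\in B$ (and $d(A,x)=d(A,\{x\})$). The boundary of $X$ is $\partial X=\{y\notin X:\ y\sim x \text{ for some } x\in X\}$, and $\mathrm{width}(X)=\sup_{x\in X} d(\partial X,x)$. For $w:V\to\mathbb{R}$ the discrete infinity Laplacian is $\Delta_\infty w(x)=\inf_{y\sim x}w(y)+\sup_{y\sim x}w(y)-2w(x)$ (infima and suprema taken in the extended reals). *)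

theory Defs
  imports "HOL-Analysis.Analysis" "HOL-Library.Extended_Nat"
begin

text \<open>A graph on the vertex type 'a (vertex set V = UNIV), given by an
  adjacency relation E: x \<sim> y iff E x y.\<close>

definition path_len :: "('a \<Rightarrow> 'a \<Rightarrow> bool) \<Rightarrow> 'a set \<Rightarrow> 'a set \<Rightarrow> nat \<Rightarrow> bool" where
  "path_len E A B n \<longleftrightarrow> (\<exists>p :: nat \<Rightarrow> 'a. p 0 \<in> A \<and> p n \<in> B \<and> (\<forall>i<n. E (p i) (p (Suc i))))"

text \<open>Combinatorial distance: infimum of lengths of paths from A to B (\<infinity> if none).\<close>
definition gdist :: "('a \<Rightarrow> 'a \<Rightarrow> bool) \<Rightarrow> 'a set \<Rightarrow> 'a set \<Rightarrow> enat" where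
  "gdist E A B = (INF n \<in> {n. path_len E A B n}. enat n)"

definition gboundary :: "('a \<Rightarrow> 'a \<Rightarrow> bool) \<Rightarrow> 'a set \<Rightarrow> 'a set" where
  "gboundary E X = {y. y \<notin> X \<and> (\<exists>x\<in>X. E y x)}"

definition gwidth :: "('a \<Rightarrow> 'a \<Rightarrow> bool) \<Rightarrow> 'a set \<Rightarrow> enat" where
  "gwidth E X = (SUP x \<in> X. gdist E (gboundary E X) {x})"

definition inf_laplacian :: "('a \<Rightarrow> 'a \<Rightarrow> bool) \<Rightarrow> ('a \<Rightarrow> real) \<Rightarrow> 'a \<Rightarrow> ereal" where
  "inf_laplacian E w x =
     (INF y \<in> {y. E x y}. ereal (w y)) + (SUP y \<in> {y. E x y}. ereal (w y)) - 2 * ereal (w x)"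

end

theory Submission
  imports Defs
begin
lemma lap_eq:
  fixes w :: "'a \<Rightarrow> real"
  assumes "N \<noteq> {}" "bdd_below (w`N)" "bdd_above (w`N)"
  shows "(INF y\<in>N. ereal (w y)) = ereal (Inf (w`N))" "(SUP y\<in>N. ereal (w y)) = ereal (Sup (w`N))"
proof -
  show "(INF y\<in>N. ereal (w y)) = ereal (Inf (w`N))"
    using ereal_Inf'[of "w`N"] assms by (simp add: image_comp)
  show "(SUP y\<in>N. ereal (w y)) = ereal (Sup (w`N))"
  proof -
    obtain a where a: "\<forall>y\<in>N. w y \<le> a" using assms(3) by (auto simp: bdd_above_def)
    obtain y0 where y0: "y0 \<in> N" using assms(1) by auto
    obtain b where b: "\<forall>y\<in>N. b \<le> w y" using assms(2) by (auto simp: bdd_below_def)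
    have "\<bar>SUP a\<in>w`N. ereal a\<bar> \<noteq> \<infinity>"
      by (rule ereal_SUP_not_infty[of _ "ereal b" "ereal a"]) (use a b y0 in auto)
    then show ?thesis using ereal_Sup[of "w`N"] by (simp add: image_comp)
  qed
qed

lemma super_facts:
  fixes v :: "'a \<Rightarrow> real"
  assumes lb: "\<And>y. v y \<ge> -C" and sup: "- inf_laplacian E v x \<ge> ereal c"
  shows "{y. E x y} \<noteq> {}" "bdd_above (v`{y. E x y})"
    "Inf (v`{y. E x y}) + Sup (v`{y. E x y}) - 2 * v x \<le> -c"
proof -
  let ?N = "{y. E x y}"
  show ne: "?N \<noteq> {}"
  proof
    assume "?N = {}"
    then have "inf_laplacian E v x = \<infinity>" unfolding inf_laplacian_def by (simp only:) (simp add: top_ereal_def bot_ereal_def)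
    then show False using sup by simp
  qed
  have bb: "bdd_below (v`?N)" using lb by (auto intro: bdd_belowI[of _ "-C"])
  have I: "(INF y\<in>?N. ereal (v y)) \<ge> ereal (-C)" using lb by (auto intro!: INF_greatest)
  show ba: "bdd_above (v`?N)"
  proof (rule ccontr)
    assume nb: "\<not> bdd_above (v`?N)"
    have "(SUP y\<in>?N. ereal (v y)) = \<infinity>"
    proof (rule ccontr)
      assume "(SUP y\<in>?N. ereal (v y)) \<noteq> \<infinity>"
      then obtain r where "(SUP y\<in>?N. ereal (v y)) \<le> ereal r"
        by (cases "(SUP y\<in>?N. ereal (v y))") auto
      then have "\<forall>y\<in>?N. v y \<le> r" by (metis SUP_le_iff ereal_less_eq(3))
      then show False using nb by (auto intro: bdd_aboveI2)
    qed
    then have "inf_laplacian E v x = \<infinity>" using I unfolding inf_laplacian_def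
      by (cases "(INF y\<in>?N. ereal (v y))") auto
    then show False using sup by simp
  qed
  show "Inf (v`?N) + Sup (v`?N) - 2 * v x \<le> -c"
    using sup unfolding inf_laplacian_def lap_eq[OF ne bb ba]
    by (simp add: ereal_minus_le_iff) 
qed
lemma sub_facts:
  fixes u :: "'a \<Rightarrow> real"
  assumes ub: "\<And>y. u y \<le> C" and sub: "ereal c \<ge> - inf_laplacian E u x"
    and ne: "{y. E x y} \<noteq> {}"
  shows "bdd_below (u`{y. E x y})" "bdd_above (u`{y. E x y})"
    "Inf (u`{y. E x y}) + Sup (u`{y. E x y}) - 2 * u x \<ge> -c"
proof -
  let ?N = "{y. E x y}"
  show ba: "bdd_above (u`?N)" using ub by (auto intro: bdd_aboveI[of _ "C"])
  have S: "(SUP y\<in>?N. ereal (u y)) \<le> ereal C" using ub by (auto intro!: SUP_least)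
  show bb: "bdd_below (u`?N)"
  proof (rule ccontr)
    assume nb: "\<not> bdd_below (u`?N)"
    have "(INF y\<in>?N. ereal (u y)) = -\<infinity>"
    proof (rule ccontr)
      assume "(INF y\<in>?N. ereal (u y)) \<noteq> -\<infinity>"
      then obtain r where "(INF y\<in>?N. ereal (u y)) \<ge> ereal r"
        by (cases "(INF y\<in>?N. ereal (u y))") auto
      then have "\<forall>y\<in>?N. r \<le> u y" by (metis le_INF_iff ereal_less_eq(3))
      then show False using nb by (auto intro: bdd_belowI2)
    qed
    then have "inf_laplacian E u x = -\<infinity>" using S unfolding inf_laplacian_def
      by (cases "(SUP y\<in>?N. ereal (u y))") auto
    then show False using sub by simp
  qed
  show "Inf (u`?N) + Sup (u`?N) - 2 * u x \<ge> -c"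
    using sub unfolding inf_laplacian_def lap_eq[OF ne bb ba]
    by (simp add: ereal_minus_le_iff) 
qed

lemma local_step:
  fixes u v :: "'a \<Rightarrow> real" and N :: "'a set"
  assumes ne: "N \<noteq> {}" and bvb: "bdd_below (v`N)" and bva: "bdd_above (v`N)"
    and bub: "bdd_below (u`N)" and bua: "bdd_above (u`N)"
    and h1: "Inf (u`N) + Sup (u`N) - 2 * u x \<ge> -c"
    and h2: "Inf (v`N) + Sup (v`N) - 2 * v x \<le> -c"
    and c0: "c \<ge> 0" and lb: "\<And>y. v y \<ge> -C" and ub: "\<And>y. u y \<le> C"
    and eps: "\<epsilon> > 0"
    and Mt: "\<And>y. u y - (v y - \<epsilon> * exp (- v y)) \<le> Mt"
    and ex: "Mt - (u x - (v x - \<epsilon> * exp (- v x))) \<le> \<eta>" and eta1: "\<eta> \<le> 1"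
    and y: "y \<in> N"
  shows "Mt - (u y - (v y - \<epsilon> * exp (- v y))) \<le>
    2 * \<eta> + (2 + 2 * \<epsilon> * exp C) * sqrt (4 * \<eta> * exp (C + \<epsilon> * exp C - Mt + 1) / \<epsilon>)"
proof -
  define g where "g s = s - \<epsilon> * exp (- s)" for s :: real
  define Iu where "Iu = Inf (u`N)"
  define Su where "Su = Sup (u`N)"
  define Iv where "Iv = Inf (v`N)"
  define Sv where "Sv = Sup (v`N)"
  have gmono: "mono g" unfolding g_def mono_def
  proof (intro allI impI)
    fix s t :: real assume "s \<le> t"
    then have "exp (- t) \<le> exp (- s)" by simp
    then show "s - \<epsilon> * exp (- s) \<le> t - \<epsilon> * exp (- t)" using eps \<open>s \<le> t\<close>
      by (smt (verit) mult_left_mono)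
  qed
  have gcont: "continuous (at_right Iv) g" unfolding g_def
    by (intro continuous_intros)
  have ginf: "g Iv = Inf (g ` v ` N)" unfolding Iv_def
    by (rule continuous_at_Inf_mono[OF gmono _ _ bvb]) (use gcont ne Iv_def in auto)
  have uyM: "u z \<le> Mt + g (v z)" for z using Mt[of z] unfolding g_def by simp
  have A: "Iu - Mt \<le> g Iv"
  proof -
    have "Iu - Mt \<le> Inf (g ` v ` N)"
    proof (rule cInf_greatest)
      show "g ` v ` N \<noteq> {}" using ne by auto
      fix t assume "t \<in> g ` v ` N"
      then obtain z where z: "z \<in> N" "t = g (v z)" by auto
      have "Iu \<le> u z" unfolding Iu_def using z bub by (auto intro: cInf_lower)
      then show "Iu - Mt \<le> t" using uyM[of z] z by simp
    qed
    then show ?thesis using ginf by simp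
  qed
  have vSv: "v z \<le> Sv" if "z \<in> N" for z unfolding Sv_def using that bva by (auto intro: cSup_upper)
  have vIv: "Iv \<le> v z" if "z \<in> N" for z unfolding Iv_def using that bvb by (auto intro: cInf_lower)
  have uIu: "Iu \<le> u z" if "z \<in> N" for z unfolding Iu_def using that bub by (auto intro: cInf_lower)
  have B: "Su \<le> Mt + g Sv" unfolding Su_def
  proof (rule cSup_least)
    show "u ` N \<noteq> {}" using ne by auto
    fix t assume "t \<in> u ` N"
    then obtain z where z: "z \<in> N" "t = u z" by auto
    have "g (v z) \<le> g Sv" using gmono vSv[OF z(1)] by (simp add: mono_def)
    then show "t \<le> Mt + g Sv" using uyM[of z] z by simp
  qed
  define a where "a = Sv - v x"
  define b where "b = v x - Iv"
  have ab: "a \<le> b" using h2 c0 unfolding a_def b_def Iv_def Sv_def by simp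
  have b0: "b \<ge> 0" using vSv[OF y] vIv[OF y] ab unfolding a_def b_def by simp
  have gap: "\<epsilon> * (exp (- Iv) + exp (- Sv)) \<le> 2 * Mt - 2 * (u x - v x)"
    using A B h1 h2 unfolding g_def Iu_def Su_def Iv_def Sv_def by (simp add: algebra_simps)
  have e1: "exp (- Iv) = exp (- v x) * exp b" unfolding b_def by (simp add: exp_add[symmetric])
  have e2: "exp (- Sv) = exp (- v x) * exp (- a)" unfolding a_def by (simp add: exp_add[symmetric])
  have "exp (- b) \<le> exp (- a)" using ab by simp
  then have e3: "exp (- v x) * exp (- b) \<le> exp (- Sv)" unfolding e2 by simp
  have q: "2 + b^2 / 2 \<le> exp b + exp (- b)"
    using exp_lower_Taylor_quadratic[OF b0] exp_ge_add_one_self[of "-b"] by simp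
  have "exp (- v x) * (2 + b^2 / 2) \<le> exp (- v x) * (exp b + exp (- b))"
    using q by simp
  then have "exp (- v x) * (2 + b^2 / 2) \<le> exp (- Iv) + exp (- Sv)"
    using e1 e3 by (simp add: algebra_simps)
  then have "\<epsilon> * (exp (- v x) * (2 + b^2 / 2)) \<le> \<epsilon> * (exp (- Iv) + exp (- Sv))"
    using eps by (intro mult_left_mono) auto
  then have hb: "\<epsilon> * exp (- v x) * b^2 \<le> 4 * \<eta>"
    using gap ex by (simp add: algebra_simps)
  have vx: "v x \<le> C + \<epsilon> * exp C - Mt + 1"
  proof -
    have "exp (- v x) \<le> exp C" using lb[of x] by simp
    then have "\<epsilon> * exp (- v x) \<le> \<epsilon> * exp C" using eps by simp
    then show ?thesis using ex eta1 ub[of x] by simp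
  qed
  define V0 where "V0 = C + \<epsilon> * exp C - Mt + 1"
  have eta0: "\<eta> \<ge> 0" using ex Mt[of x] by simp
  have bsq: "b^2 \<le> 4 * \<eta> * exp V0 / \<epsilon>"
  proof -
    have pos: "\<epsilon> * exp (- v x) > 0" using eps by simp
    have "b^2 \<le> 4 * \<eta> / (\<epsilon> * exp (- v x))"
      using hb pos by (simp add: le_divide_eq mult.commute)
    also have "\<dots> = 4 * \<eta> * exp (v x) / \<epsilon>" by (simp add: exp_minus field_simps)
    also have "\<dots> \<le> 4 * \<eta> * exp V0 / \<epsilon>"
      using vx eta0 eps unfolding V0_def by (intro divide_right_mono mult_left_mono) auto
    finally show ?thesis .
  qed
  have bs: "b \<le> sqrt (4 * \<eta> * exp V0 / \<epsilon>)"
    using real_sqrt_le_mono[OF bsq] b0 by simp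
  have nb: "Mt - (u y - (v y - \<epsilon> * exp (- v y))) \<le> 2 * \<eta> + (a + b) + 2 * \<epsilon> * (exp (- v x) - exp (- Sv))"
  proof -
    have "Iu \<le> u y" using uIu[OF y] .
    moreover have "g (v y) \<le> g Sv" using gmono vSv[OF y] by (simp add: mono_def)
    ultimately show ?thesis using h1 h2 B ex unfolding g_def Iu_def Su_def Iv_def Sv_def a_def b_def
      by (simp add: algebra_simps)
  qed
  have ed: "exp (- v x) - exp (- Sv) \<le> exp C * b"
  proof -
    have "exp (- v x) * (1 - a) \<le> exp (- v x) * exp (- a)"
      using exp_ge_add_one_self[of "-a"] by (intro mult_left_mono) auto
    then have "exp (- v x) - exp (- Sv) \<le> exp (- v x) * a" unfolding e2 by (simp add: algebra_simps)
    also have "\<dots> \<le> exp (- v x) * b" using ab by simp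
    also have "\<dots> \<le> exp C * b" using lb[of x] b0 by (intro mult_right_mono) auto
    finally show ?thesis .
  qed
  have "Mt - (u y - (v y - \<epsilon> * exp (- v y))) \<le> 2 * \<eta> + (2 + 2 * \<epsilon> * exp C) * b"
  proof -
    have "\<epsilon> * (exp (- v x) - exp (- Sv)) \<le> \<epsilon> * (exp C * b)"
      using ed eps by (intro mult_left_mono) auto
    then show ?thesis using nb ab by (simp add: algebra_simps)
  qed
  also have "\<dots> \<le> 2 * \<eta> + (2 + 2 * \<epsilon> * exp C) * sqrt (4 * \<eta> * exp V0 / \<epsilon>)"
    using bs eps by (intro add_left_mono mult_left_mono) auto
  finally show ?thesis unfolding V0_def .
qed

theorem theorem1p2:
  fixes E :: "'a \<Rightarrow> 'a \<Rightarrow> bool"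
    and X :: "'a set"
    and f u v :: "'a \<Rightarrow> real"
    and C :: real
  assumes sym: "\<And>x y. E x y \<Longrightarrow> E y x"
    and irrefl: "\<And>x. \<not> E x x"
    and width: "gwidth E X < \<infinity>"
    and f_nonneg: "\<And>x. x \<in> X \<Longrightarrow> f x \<ge> 0"
    and C_pos: "C > 0"
    and v_lb: "\<And>x. v x \<ge> - C"
    and u_ub: "\<And>x. u x \<le> C"
    and super: "\<And>x. x \<in> X \<Longrightarrow> - inf_laplacian E v x \<ge> ereal (f x)"
    and sub: "\<And>x. x \<in> X \<Longrightarrow> ereal (f x) \<ge> - inf_laplacian E u x"
  shows "(SUP x. ereal (u x - v x)) = (SUP x \<in> UNIV - X. ereal (u x - v x))"
proof (rule antisym)
  show "(SUP x \<in> UNIV - X. ereal (u x - v x)) \<le> (SUP x. ereal (u x - v x))"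
    by (rule SUP_subset_mono) auto
  show "(SUP x. ereal (u x - v x)) \<le> (SUP x \<in> UNIV - X. ereal (u x - v x))"
  proof (rule SUP_least)
    fix x0
    let ?R = "(SUP x \<in> UNIV - X. ereal (u x - v x))"
    show "ereal (u x0 - v x0) \<le> ?R"
    proof (rule ccontr)
      assume "\<not> ereal (u x0 - v x0) \<le> ?R"
      then have Rlt: "?R < ereal (u x0 - v x0)" by simp
      obtain r where r1: "\<And>y. y \<notin> X \<Longrightarrow> u y - v y \<le> r" and r2: "r < u x0 - v x0"
      proof (cases ?R)
        case (real r')
        show ?thesis
        proof
          fix y assume "y \<notin> X"
          then have "ereal (u y - v y) \<le> ?R" by (intro SUP_upper) auto
          then show "u y - v y \<le> r'" using real by simp
        next
          show "r' < u x0 - v x0" using Rlt real by simp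
        qed
      next
        case PInf then show ?thesis using Rlt by simp
      next
        case MInf
        show ?thesis
        proof
          fix y assume "y \<notin> X"
          then have "ereal (u y - v y) \<le> ?R" by (intro SUP_upper) auto
          then show "u y - v y \<le> u x0 - v x0 - 1" using MInf by simp
        qed simp
      qed
      define \<delta> where "\<delta> = u x0 - v x0 - r"
      have d0: "\<delta> > 0" using r2 unfolding \<delta>_def by simp
      define \<epsilon> where "\<epsilon> = \<delta> / (4 * exp C)"
      have eps0: "\<epsilon> > 0" using d0 unfolding \<epsilon>_def by simp
      have epsC: "\<epsilon> * exp C = \<delta> / 4" unfolding \<epsilon>_def by simp
      define wt where "wt y = u y - (v y - \<epsilon> * exp (- v y))" for y
      have expv: "\<epsilon> * exp (- v y) \<le> \<epsilon> * exp C" for y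
        using v_lb[of y] eps0 by (intro mult_left_mono) auto
      have expv0: "\<epsilon> * exp (- v y) \<ge> 0" for y using eps0 by simp
      have bdd: "bdd_above (range wt)"
        by (rule bdd_aboveI[of _ "C + C + \<epsilon> * exp C"])
           (use u_ub v_lb expv in \<open>auto simp: wt_def intro: add_mono\<close>, smt (verit) u_ub v_lb expv)
      define Mt where "Mt = Sup (range wt)"
      have Mt: "wt y \<le> Mt" for y unfolding Mt_def using bdd by (auto intro: cSup_upper)
      have out: "Mt - wt y \<ge> 3 * \<delta> / 4" if "y \<notin> X" for y
      proof -
        have "wt y \<le> r + \<delta> / 4" using r1[OF that] expv[of y] epsC unfolding wt_def by simp
        moreover have "wt x0 \<ge> r + \<delta>" using expv0[of x0] unfolding wt_def \<delta>_def by simp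
        ultimately show ?thesis using Mt[of x0] by simp
      qed
      define V0 where "V0 = C + \<epsilon> * exp C - Mt + 1"
      define K where "K = 3 + (2 + 2 * \<epsilon> * exp C) * sqrt (4 * exp V0 / \<epsilon>)"
      have K1: "K \<ge> 1" unfolding K_def using eps0 by (simp add: add_nonneg_nonneg)
      have step: "Mt - wt y \<le> K * sqrt \<eta>"
        if x: "x \<in> X" and xy: "E x y" and ex: "Mt - wt x \<le> \<eta>" and e1: "\<eta> \<le> 1" for x y \<eta>
      proof -
        note sv = super_facts[OF v_lb super[OF x]]
        note su = sub_facts[OF u_ub sub[OF x] sv(1)]
        have bvb: "bdd_below (v`{y. E x y})" using v_lb by (auto intro: bdd_belowI[of _ "-C"])
        have e0: "\<eta> \<ge> 0" using ex Mt[of x] by simp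
        have "Mt - wt y \<le> 2 * \<eta> + (2 + 2 * \<epsilon> * exp C) * sqrt (4 * \<eta> * exp V0 / \<epsilon>)"
          unfolding wt_def V0_def
          by (rule local_step[OF sv(1) bvb sv(2) su(1) su(2) su(3) sv(3) f_nonneg[OF x] v_lb u_ub eps0])
             (use Mt ex e1 xy in \<open>auto simp: wt_def\<close>)
        also have "\<dots> = 2 * \<eta> + (2 + 2 * \<epsilon> * exp C) * sqrt (4 * exp V0 / \<epsilon>) * sqrt \<eta>"
        proof -
          have "4 * \<eta> * exp V0 / \<epsilon> = (4 * exp V0 / \<epsilon>) * \<eta>" by simp
          then have "sqrt (4 * \<eta> * exp V0 / \<epsilon>) = sqrt (4 * exp V0 / \<epsilon>) * sqrt \<eta>"
            by (simp only: real_sqrt_mult)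
          then show ?thesis by simp
        qed
        also have "\<dots> \<le> 2 * sqrt \<eta> + (2 + 2 * \<epsilon> * exp C) * sqrt (4 * exp V0 / \<epsilon>) * sqrt \<eta>"
        proof -
          have "\<eta> \<le> sqrt \<eta>" using e0 e1 by (intro real_le_rsqrt) (simp add: power2_eq_square mult_left_le) 
          then show ?thesis by simp
        qed
        also have "\<dots> \<le> K * sqrt \<eta>" unfolding K_def using e0 by (simp add: algebra_simps)
        finally show ?thesis .
      qed
      define \<eta>0 where "\<eta>0 = min 1 (\<delta> / 2)"
      define \<eta> where "\<eta> n = ((\<lambda>e. (e / K)^2) ^^ n) \<eta>0" for n
      have eta_Suc: "\<eta> (Suc n) = (\<eta> n / K)^2" for n unfolding \<eta>_def by simp
      have eta_pos: "\<eta> n > 0" for n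
        by (induction n) (use K1 d0 in \<open>auto simp: eta_Suc \<eta>_def \<eta>0_def\<close>)
      have eta01: "\<eta>0 \<le> 1" "\<eta>0 < 3 * \<delta> / 4" unfolding \<eta>0_def using d0 by auto
      have sq: "(e / K)^2 \<le> e" if "0 \<le> e" "e \<le> 1" for e
      proof -
        have a: "e / K \<le> 1" "0 \<le> e / K" using that K1 by (auto simp: divide_le_eq)
        have "(e / K) * (e / K) \<le> e / K" using a by (intro mult_left_le) auto
        then have "(e / K)^2 \<le> e / K" by (simp add: power2_eq_square)
        also have "\<dots> \<le> e" using that K1 by (simp add: divide_le_eq mult_le_cancel_left1)
        finally show ?thesis .
      qed
      have eta_le: "\<eta> n \<le> \<eta>0" for n
      proof (induction n)
        case 0 show ?case by (simp add: \<eta>_def)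
      next
        case (Suc n)
        then show ?case using sq[of "\<eta> n"] eta_pos[of n] eta01 by (simp add: eta_Suc)
      qed
      have eta_dec: "\<eta> (Suc n) \<le> \<eta> n" for n
        using sq[of "\<eta> n"] eta_pos[of n] eta_le[of n] eta01 by (simp add: eta_Suc)
      have eta_K: "K * sqrt (\<eta> (Suc n)) = \<eta> n" for n
        using eta_pos[of n] K1 by (simp add: eta_Suc real_sqrt_divide)
      have eta_anti: "\<eta> m \<le> \<eta> n" if "n \<le> m" for n m
        using that by (induction m) (auto intro: order_trans[OF eta_dec] simp: le_Suc_eq)
      have claim: "p 0 \<in> gboundary E X \<longrightarrow> (\<forall>i<n. E (p i) (p (Suc i))) \<longrightarrow> Mt - wt (p n) > \<eta> n"
        for n p
      proof (induction n)
        case 0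
        show ?case
        proof (intro impI)
          assume "p 0 \<in> gboundary E X"
          then have "p 0 \<notin> X" unfolding gboundary_def by simp
          then show "Mt - wt (p 0) > \<eta> 0" using out[of "p 0"] eta_le[of 0] eta01 by simp
        qed
      next
        case (Suc n)
        show ?case
        proof (intro impI)
          assume b: "p 0 \<in> gboundary E X" and edges: "\<forall>i<Suc n. E (p i) (p (Suc i))"
          then have IH: "Mt - wt (p n) > \<eta> n" using Suc by simp
          show "Mt - wt (p (Suc n)) > \<eta> (Suc n)"
          proof (rule ccontr)
            assume "\<not> Mt - wt (p (Suc n)) > \<eta> (Suc n)"
            then have le: "Mt - wt (p (Suc n)) \<le> \<eta> (Suc n)" by simp
            show False
            proof (cases "p (Suc n) \<in> X")
              case False
              then show False using out[of "p (Suc n)"] le eta_le[of "Suc n"] eta01 by simp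
            next
              case True
              have "E (p (Suc n)) (p n)" using edges sym by auto
              then have "Mt - wt (p n) \<le> K * sqrt (\<eta> (Suc n))"
                using step[OF True _ le] eta_le[of "Suc n"] eta01 by simp
              then show False using IH eta_K[of n] by simp
            qed
          qed
        qed
      qed
      obtain W :: nat where W: "gwidth E X = enat W" using width by (cases "gwidth E X") auto
      have "Mt - \<eta> W < Mt" using eta_pos[of W] by simp
      then obtain x where x: "Mt - \<eta> W < wt x" unfolding Mt_def
        using less_cSup_iff[of "range wt"] bdd by auto
      have xX: "x \<in> X"
      proof (rule ccontr)
        assume "x \<notin> X"
        then show False using out[of x] x eta_le[of W] eta01 by simp
      qed
      have "\<exists>n\<in>{n. path_len E (gboundary E X) {x} n}. n \<le> W"
      proof (rule ccontr)
        assume "\<not> ?thesis"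
        then have "enat (Suc W) \<le> gdist E (gboundary E X) {x}"
          unfolding gdist_def by (intro INF_greatest) auto
        moreover have "gdist E (gboundary E X) {x} \<le> gwidth E X"
          unfolding gwidth_def using xX by (intro SUP_upper) auto
        ultimately have "enat (Suc W) \<le> enat W" using W by (metis order_trans)
        then show False by simp
      qed
      then obtain n p where n: "n \<le> W" "p 0 \<in> gboundary E X" "p n = x"
        "\<forall>i<n. E (p i) (p (Suc i))" unfolding path_len_def by auto
      have "Mt - wt x > \<eta> n" using claim[of p n] n by simp
      moreover have "\<eta> W \<le> \<eta> n" using eta_anti n(1) by simp
      ultimately show False using x by simp
    qed
  qed
qed

end
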